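(* Fix $R>0$, $\theta=2^{2R}-1$, and $a_2\in(0,1/(1+\theta))$ (with $a_1=1-a_2>a_2$). Let $P_{\mathrm{SC}}(\rho)$ be the SC outage probability defined below. Then $$-\lim_{\rho\to\infty}\frac{\log P_{\mathrm{SC}}(\rho)}{\log\rho}=\min\{m_{sd}N_d,\ m_{sr}N_r,\ m_{rd}N_d\}.$$
   Context: Let $N_r,N_d$ be positive integers, $m_{sr},m_{sd},m_{rd}$ positive integers, and $\Omega_{sr},\Omega_{sd},\Omega_{rd}>0$. Let $\{G_{sr,i}\}_{i=1}^{N_r}$, $\{G_{sd,j}\}_{j=1}^{N_d}$, $\{G_{rd,k}\}_{k=1}^{N_d}$ be mutually independent random variables, where each $G_{sr,i}$ has the Gamma density $\frac{(m_{sr}/\Omega_{sr})^{m_{sr}}x^{m_{sr}-1}}{\Gamma(m_{sr})}e^{-m_{sr}x/\Omega_{sr}}$, $x>0$, and analogously $G_{sd,j}$ with $(m_{sd},\Omega_{sd})$ and $G_{rd,k}$ with $(m_{rd},\Omega_{rd})$. SC gains: $g_{sr}=\max_i G_{sr,i}$, $g_{sd}=\max_j G_{sd,j}$, $g_{rd}=\max_k G_{rd,k}$. For $\rho>0$ the outage probability is $P_{\mathrm{SC}}(\rho)=1-\Pr\big(\tfrac{a_1\rho g_{sd}}{a_2\rho g_{sd}+1}\ge\theta\big)\Pr\big(\tfrac{a_1\rho g_{sr}}{a_2\rho g_{sr}+1}\ge\theta,\ a_2\rho g_{sr}\ge\theta\big)\Pr(\rho g_{rd}\ge\theta)$. *)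

theory Defs
  imports "HOL-Probability.Probability"
begin

text \<open>Gamma (Nakagami-m power) density with shape m and mean Omega.\<close>
definition gamma_pdf :: "nat \<Rightarrow> real \<Rightarrow> real \<Rightarrow> real" where
  "gamma_pdf m \<Omega> x = (if x > 0 then ((real m / \<Omega>) ^ m * x ^ (m - 1) / Gamma (real m))
                                       * exp (- real m * x / \<Omega>) else 0)"

definition sc_gain :: "(nat \<Rightarrow> 'a \<Rightarrow> real) \<Rightarrow> nat \<Rightarrow> 'a \<Rightarrow> real" where
  "sc_gain G N \<omega> = Max ((\<lambda>i. G i \<omega>) ` {1..N})"

definition P_SC :: "'a measure \<Rightarrow> (nat \<Rightarrow> 'a \<Rightarrow> real) \<Rightarrow> (nat \<Rightarrow> 'a \<Rightarrow> real) \<Rightarrow>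
    (nat \<Rightarrow> 'a \<Rightarrow> real) \<Rightarrow> nat \<Rightarrow> nat \<Rightarrow> real \<Rightarrow> real \<Rightarrow> real \<Rightarrow> real \<Rightarrow> real" where
  "P_SC M Gsr Gsd Grd Nr Nd a1 a2 \<theta> \<rho> =
     1 - measure M {\<omega> \<in> space M. a1 * \<rho> * sc_gain Gsd Nd \<omega> / (a2 * \<rho> * sc_gain Gsd Nd \<omega> + 1) \<ge> \<theta>}
       * measure M {\<omega> \<in> space M. a1 * \<rho> * sc_gain Gsr Nr \<omega> / (a2 * \<rho> * sc_gain Gsr Nr \<omega> + 1) \<ge> \<theta>
                                  \<and> a2 * \<rho> * sc_gain Gsr Nr \<omega> \<ge> \<theta>}
       * measure M {\<omega> \<in> space M. \<rho> * sc_gain Grd Nd \<omega> \<ge> \<theta>}"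

end

theory Submission
  imports Defs
begin


lemma lim_dc: "((\<lambda>\<rho>::real. real d - c / ln \<rho>) \<longlongrightarrow> real d) at_top"
proof -
  have "((\<lambda>\<rho>::real. c / ln \<rho>) \<longlongrightarrow> 0) at_top"
    by (rule tendsto_divide_0[OF tendsto_const filterlim_at_top_imp_at_infinity[OF ln_at_top]])
  from tendsto_diff[OF tendsto_const this] show ?thesis by simp
qed

lemma squeeze_exp:
  fixes P :: "real \<Rightarrow> real"
  assumes "L > 0" "\<forall>\<^sub>F \<rho> in at_top. L / \<rho> ^ d \<le> P \<rho> \<and> P \<rho> \<le> S / \<rho> ^ d"
  shows "((\<lambda>\<rho>. - ln (P \<rho>) / ln \<rho>) \<longlongrightarrow> real d) at_top"
proof (rule tendsto_sandwich[OF _ _ lim_dc[of d "ln S"] lim_dc[of d "ln L"]])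
  have ev: "\<forall>\<^sub>F \<rho> in at_top. \<rho> > 1 \<and> L / \<rho> ^ d \<le> P \<rho> \<and> P \<rho> \<le> S / \<rho> ^ d"
    using assms(2) eventually_gt_at_top[of "1::real"] by eventually_elim auto
  show "\<forall>\<^sub>F \<rho> in at_top. real d - ln S / ln \<rho> \<le> - ln (P \<rho>) / ln \<rho>"
    using ev
  proof eventually_elim
    case (elim \<rho>)
    then have r: "\<rho> > 1" and lo: "L / \<rho> ^ d \<le> P \<rho>" and up: "P \<rho> \<le> S / \<rho> ^ d" by auto
    have rp: "\<rho> ^ d > 0" using r by simp
    have Pp: "P \<rho> > 0" using lo assms(1) rp by (meson divide_pos_pos less_le_trans)
    then have Sp: "S > 0" using up rp by (smt (verit) divide_nonpos_pos)
    have "ln (P \<rho>) \<le> ln (S / \<rho> ^ d)" using Pp up by simp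
    also have "\<dots> = ln S - real d * ln \<rho>" using Sp rp r by (simp add: ln_div ln_realpow)
    finally have X: "real d * ln \<rho> - ln S \<le> - ln (P \<rho>)" by simp
    have lp: "ln \<rho> > 0" using r by simp
    have "real d - ln S / ln \<rho> = (real d * ln \<rho> - ln S) / ln \<rho>" using lp by (simp add: field_simps)
    then show ?case using divide_right_mono[OF X less_imp_le[OF lp]] by simp
  qed
  show "\<forall>\<^sub>F \<rho> in at_top. - ln (P \<rho>) / ln \<rho> \<le> real d - ln L / ln \<rho>"
    using ev
  proof eventually_elim
    case (elim \<rho>)
    then have r: "\<rho> > 1" and lo: "L / \<rho> ^ d \<le> P \<rho>" by auto
    have rp: "\<rho> ^ d > 0" using r by simp
    have "ln L - real d * ln \<rho> = ln (L / \<rho> ^ d)" using assms(1) rp r by (simp add: ln_div ln_realpow)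
    also have "\<dots> \<le> ln (P \<rho>)" using lo assms(1) rp by (intro ln_mono) auto
    finally have X: "- ln (P \<rho>) \<le> real d * ln \<rho> - ln L" by simp
    have lp: "ln \<rho> > 0" using r by simp
    have "real d - ln L / ln \<rho> = (real d * ln \<rho> - ln L) / ln \<rho>" using lp by (simp add: field_simps)
    then show ?case using divide_right_mono[OF X less_imp_le[OF lp]] by simp
  qed
qed

lemma alg3:
  fixes a b c :: real
  assumes "0 \<le> a" "a \<le> 1" "0 \<le> b" "b \<le> 1" "0 \<le> c" "c \<le> 1"
  shows "a \<le> 1 - (1-a)*(1-b)*(1-c)" "b \<le> 1 - (1-a)*(1-b)*(1-c)" "c \<le> 1 - (1-a)*(1-b)*(1-c)"
    "1 - (1-a)*(1-b)*(1-c) \<le> a + b + c"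
proof -
  have yz: "(1-b)*(1-c) \<le> 1" by (rule mult_le_one) (use assms in auto)
  have xz: "(1-a)*(1-c) \<le> 1" by (rule mult_le_one) (use assms in auto)
  have xy: "(1-a)*(1-b) \<le> 1" by (rule mult_le_one) (use assms in auto)
  have "(1-a)*((1-b)*(1-c)) \<le> 1-a" by (rule mult_left_le[OF yz]) (use assms in auto)
  then show "a \<le> 1 - (1-a)*(1-b)*(1-c)" by (simp add: mult.assoc)
  have "(1-b)*((1-a)*(1-c)) \<le> 1-b" by (rule mult_left_le[OF xz]) (use assms in auto)
  then show "b \<le> 1 - (1-a)*(1-b)*(1-c)" by (simp add: ac_simps)
  have "(1-c)*((1-a)*(1-b)) \<le> 1-c" by (rule mult_left_le[OF xy]) (use assms in auto)
  then show "c \<le> 1 - (1-a)*(1-b)*(1-c)" by (simp add: ac_simps)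
  have ab: "0 \<le> a*b" using assms by simp
  define X where "X = (1-a)*(1-b)"
  define Y where "Y = X*c"
  have e1: "Y \<le> c" unfolding Y_def by (rule mult_left_le_one_le) (use assms xy in \<open>auto simp: X_def\<close>)
  have e2: "(1-a)*(1-b)*(1-c) = X - Y" by (simp add: X_def Y_def algebra_simps)
  have e3: "X = 1 - a - b + a*b" by (simp add: X_def algebra_simps)
  show "1 - (1-a)*(1-b)*(1-c) \<le> a + b + c" unfolding e2 using ab e1 e3 by linarith
qed

lemma core:
  fixes P q1 q2 q3 :: "real \<Rightarrow> real" and d1 d2 d3 :: nat
  assumes P: "\<forall>\<^sub>F \<rho> in at_top. P \<rho> = 1 - (1 - q1 \<rho>) * (1 - q2 \<rho>) * (1 - q3 \<rho>)"
    and B1: "\<forall>\<^sub>F \<rho> in at_top. L1 / \<rho> ^ d1 \<le> q1 \<rho> \<and> q1 \<rho> \<le> U1 / \<rho> ^ d1 \<and> q1 \<rho> \<le> 1"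
    and B2: "\<forall>\<^sub>F \<rho> in at_top. L2 / \<rho> ^ d2 \<le> q2 \<rho> \<and> q2 \<rho> \<le> U2 / \<rho> ^ d2 \<and> q2 \<rho> \<le> 1"
    and B3: "\<forall>\<^sub>F \<rho> in at_top. L3 / \<rho> ^ d3 \<le> q3 \<rho> \<and> q3 \<rho> \<le> U3 / \<rho> ^ d3 \<and> q3 \<rho> \<le> 1"
    and L: "L1 > 0" "L2 > 0" "L3 > 0"
  shows "((\<lambda>\<rho>. - ln (P \<rho>) / ln \<rho>) \<longlongrightarrow> real (min d1 (min d2 d3))) at_top"
proof -
  define d where "d = min d1 (min d2 d3)"
  define L where "L = (if d = d1 then L1 else if d = d2 then L2 else L3)"
  have Lp: "L > 0" unfolding L_def using L by auto
  have ev: "\<forall>\<^sub>F \<rho> in at_top. \<rho> \<ge> 1 \<and> P \<rho> = 1 - (1 - q1 \<rho>) * (1 - q2 \<rho>) * (1 - q3 \<rho>) \<and>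
     (L1 / \<rho> ^ d1 \<le> q1 \<rho> \<and> q1 \<rho> \<le> U1 / \<rho> ^ d1 \<and> q1 \<rho> \<le> 1) \<and>
     (L2 / \<rho> ^ d2 \<le> q2 \<rho> \<and> q2 \<rho> \<le> U2 / \<rho> ^ d2 \<and> q2 \<rho> \<le> 1) \<and>
     (L3 / \<rho> ^ d3 \<le> q3 \<rho> \<and> q3 \<rho> \<le> U3 / \<rho> ^ d3 \<and> q3 \<rho> \<le> 1)"
    using P B1 B2 B3 eventually_ge_at_top[of "1::real"] by eventually_elim auto
  have "\<forall>\<^sub>F \<rho> in at_top. L / \<rho> ^ d \<le> P \<rho> \<and> P \<rho> \<le> (U1 + U2 + U3) / \<rho> ^ d"
    using ev
  proof eventually_elim
    case (elim \<rho>)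
    then have r: "\<rho> \<ge> 1" and Pe: "P \<rho> = 1 - (1 - q1 \<rho>) * (1 - q2 \<rho>) * (1 - q3 \<rho>)"
      and b1: "L1 / \<rho> ^ d1 \<le> q1 \<rho>" "q1 \<rho> \<le> U1 / \<rho> ^ d1" "q1 \<rho> \<le> 1"
      and b2: "L2 / \<rho> ^ d2 \<le> q2 \<rho>" "q2 \<rho> \<le> U2 / \<rho> ^ d2" "q2 \<rho> \<le> 1"
      and b3: "L3 / \<rho> ^ d3 \<le> q3 \<rho>" "q3 \<rho> \<le> U3 / \<rho> ^ d3" "q3 \<rho> \<le> 1" by auto
    have pos: "\<And>e. \<rho> ^ e > 0" using r by simp
    have n1: "0 \<le> q1 \<rho>" using b1(1) L pos[of d1] by (smt (verit) divide_pos_pos)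
    have n2: "0 \<le> q2 \<rho>" using b2(1) L pos[of d2] by (smt (verit) divide_pos_pos)
    have n3: "0 \<le> q3 \<rho>" using b3(1) L pos[of d3] by (smt (verit) divide_pos_pos)
    note A = alg3[OF n1 b1(3) n2 b2(3) n3 b3(3), folded Pe]
    have mono: "U / \<rho> ^ e \<le> U / \<rho> ^ d" if "d \<le> e" "0 \<le> U / \<rho> ^ e" for U e
    proof -
      have U: "U \<ge> 0" using that(2) pos[of e] by (simp add: zero_le_divide_iff)
      have "\<rho> ^ d \<le> \<rho> ^ e" by (rule power_increasing[OF that(1) r])
      then show ?thesis using U pos by (intro divide_left_mono) auto
    qed
    have u1: "U1 / \<rho> ^ d1 \<le> U1 / \<rho> ^ d" using mono[of d1 U1] n1 b1 unfolding d_def by auto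
    have u2: "U2 / \<rho> ^ d2 \<le> U2 / \<rho> ^ d" using mono[of d2 U2] n2 b2 unfolding d_def by auto
    have u3: "U3 / \<rho> ^ d3 \<le> U3 / \<rho> ^ d" using mono[of d3 U3] n3 b3 unfolding d_def by auto
    have "P \<rho> \<le> (U1 + U2 + U3) / \<rho> ^ d"
      using A(4) b1(2) b2(2) b3(2) u1 u2 u3 unfolding add_divide_distrib by linarith
    moreover have "L / \<rho> ^ d \<le> P \<rho>"
    proof -
      consider "d = d1" | "d \<noteq> d1" "d = d2" | "d \<noteq> d1" "d \<noteq> d2" "d = d3" unfolding d_def by linarith
      then show ?thesis
      proof cases
        case 1
        then have "L = L1" by (simp add: L_def)
        then show ?thesis using A(1) b1(1) 1 by simp
      next
        case 2
        then have "L = L2" by (simp add: L_def)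
        then show ?thesis using A(2) b2(1) 2 by simp
      next
        case 3
        then have "L = L3" by (simp add: L_def)
        then show ?thesis using A(3) b3(1) 3 by simp
      qed
    qed
    ultimately show ?case by simp
  qed
  then show ?thesis unfolding d_def[symmetric] by (rule squeeze_exp[OF Lp])
qed



lemma indep_prod_lt:
  assumes "prob_space M" "prob_space.indep_vars M (\<lambda>_. borel) X I"
    "finite J" "J \<noteq> {}" "J \<subseteq> I"
  fixes y :: real
  shows "measure M {\<omega>\<in>space M. \<forall>j\<in>J. X j \<omega> < y} = (\<Prod>j\<in>J. measure M {\<omega>\<in>space M. X j \<omega> < y})"
proof -
  interpret prob_space M by fact
  have ind: "indep_sets (\<lambda>i. { X i -` A \<inter> space M | A. A \<in> sets borel}) I"
    using assms(2) unfolding indep_vars_def2 by auto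
  have "prob (\<Inter>j\<in>J. X j -` {..<y} \<inter> space M) = (\<Prod>j\<in>J. prob (X j -` {..<y} \<inter> space M))"
    by (rule indep_setsD[OF ind assms(5,4,3)]) (auto intro!: exI[of _ "{..<y}"])
  moreover have "(\<Inter>j\<in>J. X j -` {..<y} \<inter> space M) = {\<omega>\<in>space M. \<forall>j\<in>J. X j \<omega> < y}"
    using assms(4) by auto
  moreover have "\<And>j. X j -` {..<y} \<inter> space M = {\<omega>\<in>space M. X j \<omega> < y}" by auto
  ultimately show ?thesis by simp
qed

definition gK :: "nat \<Rightarrow> real \<Rightarrow> real" where
  "gK m \<Omega> = (real m / \<Omega>) ^ m / Gamma (real m)"
definition gc1 :: "nat \<Rightarrow> real \<Rightarrow> real" where
  "gc1 m \<Omega> = gK m \<Omega> * exp (- (real m / \<Omega>)) * (1/2) ^ m"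

lemma gc1_pos: "m > 0 \<Longrightarrow> \<Omega> > 0 \<Longrightarrow> gc1 m \<Omega> > 0"
  unfolding gc1_def gK_def by auto

lemma gamma_bounds:
  assumes "prob_space M" "m > 0" "\<Omega> > 0"
    and d: "distributed M lborel X (\<lambda>x. ennreal (gamma_pdf m \<Omega> x))"
  shows "measure M {\<omega>\<in>space M. X \<omega> < 0} = 0"
    and "\<forall>y. 0 < y \<and> y \<le> 1 \<longrightarrow>
           gc1 m \<Omega> * y ^ m \<le> measure M {\<omega>\<in>space M. X \<omega> < y} \<and> measure M {\<omega>\<in>space M. X \<omega> < y} \<le> gK m \<Omega> * y ^ m"
proof -
  interpret prob_space M by fact
  define K where "K = gK m \<Omega>"
  have Kpos: "K > 0" unfolding K_def gK_def using assms by auto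
  have f: "gamma_pdf m \<Omega> x = (if x > 0 then K * x ^ (m - 1) * exp (- real m * x / \<Omega>) else 0)" for x
    unfolding gamma_pdf_def K_def gK_def by simp
  have em: "emeasure M {\<omega>\<in>space M. X \<omega> < y} = (\<integral>\<^sup>+x. ennreal (gamma_pdf m \<Omega> x) * indicator {..<y} x \<partial>lborel)" for y
  proof -
    have "{\<omega>\<in>space M. X \<omega> < y} = X -` {..<y} \<inter> space M" by auto
    then show ?thesis using distributed_emeasure[OF d, of "{..<y}"] by simp
  qed
  have meq: "emeasure M {\<omega>\<in>space M. X \<omega> < y} = ennreal (measure M {\<omega>\<in>space M. X \<omega> < y})" for y
    by (simp add: emeasure_eq_measure)
  have "(\<integral>\<^sup>+x. ennreal (gamma_pdf m \<Omega> x) * indicator {..<0} x \<partial>lborel) = (\<integral>\<^sup>+x. 0 \<partial>(lborel::real measure))"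
    by (rule nn_integral_cong) (auto simp: f indicator_def)
  then have "ennreal (measure M {\<omega>\<in>space M. X \<omega> < 0}) = 0" using em[of 0] meq[of 0] by simp
  then show "measure M {\<omega>\<in>space M. X \<omega> < 0} = 0" by (simp add: measure_nonneg)
  define b where "b = real m / \<Omega>"
  have bpos: "b > 0" unfolding b_def using assms by auto
  have f2: "gamma_pdf m \<Omega> x = (if x > 0 then K * x ^ (m - 1) * exp (- b * x) else 0)" for x
    unfolding f b_def by simp
  define c1 where "c1 = K * exp (- b) * (1/2) ^ m"
  have c1eq: "c1 = gc1 m \<Omega>" unfolding c1_def gc1_def K_def b_def by simp
  show "\<forall>y. 0 < y \<and> y \<le> 1 \<longrightarrow>
           gc1 m \<Omega> * y ^ m \<le> measure M {\<omega>\<in>space M. X \<omega> < y} \<and> measure M {\<omega>\<in>space M. X \<omega> < y} \<le> gK m \<Omega> * y ^ m"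
    unfolding c1eq[symmetric] K_def[symmetric]
  proof (intro conjI allI impI)
    fix y :: real assume y: "0 < y \<and> y \<le> 1"
    have low: "(\<integral>\<^sup>+x. ennreal (K * exp (- b) * (y/2) ^ (m - 1)) * indicator {y/2<..<y} x \<partial>lborel)
       \<le> (\<integral>\<^sup>+x. ennreal (gamma_pdf m \<Omega> x) * indicator {..<y} x \<partial>lborel)"
    proof (intro nn_integral_mono)
      fix x
      show "ennreal (K * exp (- b) * (y/2) ^ (m - 1)) * indicator {y/2<..<y} x \<le> ennreal (gamma_pdf m \<Omega> x) * indicator {..<y} x"
      proof (cases "x \<in> {y/2<..<y}")
        case True
        then have x: "y/2 < x" "x < y" by auto
        have p1: "(y/2) ^ (m-1) \<le> x ^ (m-1)" using x y by (intro power_mono) auto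
        have p2: "exp (-b) \<le> exp (-b*x)" using x y bpos by (simp add: mult_le_cancel_left1)
        have "K * exp (- b) * (y/2) ^ (m - 1) \<le> K * x ^ (m - 1) * exp (- b * x)"
        proof -
          have "exp (- b) * (y/2) ^ (m - 1) \<le> exp (- b * x) * x ^ (m - 1)"
            using p1 p2 x y by (intro mult_mono) auto
          then have "K * (exp (- b) * (y/2) ^ (m - 1)) \<le> K * (exp (- b * x) * x ^ (m - 1))"
            using Kpos by (intro mult_left_mono) auto
          then show ?thesis by (simp add: ac_simps)
        qed
        then show ?thesis using True x y by (simp add: f2 indicator_def ennreal_leI)
      qed (simp add: indicator_def)
    qed
    have "(\<integral>\<^sup>+x. ennreal (K * exp (- b) * (y/2) ^ (m - 1)) * indicator {y/2<..<y} x \<partial>lborel)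
        = ennreal (K * exp (- b) * (y/2) ^ (m - 1)) * ennreal (y - y/2)"
      using y by (simp add: nn_integral_cmult_indicator)
    also have "\<dots> = ennreal (c1 * y ^ m)"
    proof -
      have "K * exp (- b) * (y/2) ^ (m - 1) * (y - y/2) = c1 * y ^ m"
        unfolding c1_def using assms(2)
        by (cases m) (auto simp: power_divide field_simps)
      then show ?thesis using y Kpos by (simp add: ennreal_mult''[symmetric] ennreal_mult[symmetric])
    qed
    finally have "ennreal (c1 * y ^ m) \<le> ennreal (measure M {\<omega>\<in>space M. X \<omega> < y})"
      using low em meq by simp
    then show "c1 * y ^ m \<le> measure M {\<omega>\<in>space M. X \<omega> < y}"
      by (simp add: ennreal_le_iff measure_nonneg)
    have up: "(\<integral>\<^sup>+x. ennreal (gamma_pdf m \<Omega> x) * indicator {..<y} x \<partial>lborel)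
       \<le> (\<integral>\<^sup>+x. ennreal (K * y ^ (m - 1)) * indicator {0<..<y} x \<partial>lborel)"
    proof (intro nn_integral_mono)
      fix x
      show "ennreal (gamma_pdf m \<Omega> x) * indicator {..<y} x \<le> ennreal (K * y ^ (m - 1)) * indicator {0<..<y} x"
      proof (cases "x \<in> {0<..<y}")
        case True
        then have x: "0 < x" "x < y" by auto
        have q1: "x ^ (m-1) \<le> y ^ (m-1)" using x y by (intro power_mono) auto
        have q2: "exp (-b*x) \<le> 1" using x bpos by simp
        have "x ^ (m - 1) * exp (- b * x) \<le> y ^ (m - 1) * 1"
          using q1 q2 x y by (intro mult_mono) auto
        then have "K * (x ^ (m - 1) * exp (- b * x)) \<le> K * y ^ (m - 1)"
          using Kpos by (intro mult_left_mono) auto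
        then have "K * x ^ (m - 1) * exp (- b * x) \<le> K * y ^ (m - 1)"
          by (simp add: ac_simps)
        then show ?thesis using True x y by (simp add: f2 indicator_def ennreal_leI)
      qed (auto simp: indicator_def f2)
    qed
    have "(\<integral>\<^sup>+x. ennreal (K * y ^ (m - 1)) * indicator {0<..<y} x \<partial>lborel) = ennreal (K * y ^ m)"
    proof -
      have "K * y ^ (m - 1) * y = K * y ^ m" using assms(2) by (cases m) auto
      then show ?thesis using y Kpos by (simp add: nn_integral_cmult_indicator ennreal_mult[symmetric])
    qed
    then have "ennreal (measure M {\<omega>\<in>space M. X \<omega> < y}) \<le> ennreal (K * y ^ m)"
      using up em meq by simp
    then show "measure M {\<omega>\<in>space M. X \<omega> < y} \<le> K * y ^ m"
      using y Kpos by (simp add: ennreal_le_iff)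
  qed
qed


lemma group_prod:
  fixes N :: nat
  assumes "prob_space M" "prob_space.indep_vars M (\<lambda>_. borel) X I"
    "{c} \<times> {1..N} \<subseteq> I" "N > 0" "\<And>k. X (c, k) = G k"
  fixes y :: real
  shows "measure M {\<omega>\<in>space M. \<forall>k\<in>{1..N}. G k \<omega> < y} = (\<Prod>k\<in>{1..N}. measure M {\<omega>\<in>space M. G k \<omega> < y})"
proof -
  have J: "Pair c ` {1..N} = {c} \<times> {1..N}" by auto
  have "measure M {\<omega>\<in>space M. \<forall>j\<in>Pair c ` {1..N}. X j \<omega> < y}
      = (\<Prod>j\<in>Pair c ` {1..N}. measure M {\<omega>\<in>space M. X j \<omega> < y})"
  proof (rule indep_prod_lt[OF assms(1,2)])
    show "finite (Pair c ` {1..N})" by simp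
    show "Pair c ` {1..N} \<noteq> {}" using assms(4) by auto
    show "Pair c ` {1..N} \<subseteq> I" using assms(3) J by simp
  qed
  moreover have "(\<Prod>j\<in>Pair c ` {1..N}. measure M {\<omega>\<in>space M. X j \<omega> < y})
      = (\<Prod>k\<in>{1..N}. measure M {\<omega>\<in>space M. G k \<omega> < y})"
    by (subst prod.reindex) (auto simp: inj_on_def assms(5))
  moreover have "{\<omega>\<in>space M. \<forall>j\<in>Pair c ` {1..N}. X j \<omega> < y} = {\<omega>\<in>space M. \<forall>k\<in>{1..N}. G k \<omega> < y}"
    by (auto simp: assms(5))
  ultimately show ?thesis by simp
qed

lemma group_bounds:
  assumes "prob_space M" "N > 0" "m > 0" "\<Omega> > 0"
    and dist: "\<And>k. k \<in> {1..N} \<Longrightarrow> distributed M lborel (G k) (\<lambda>x. ennreal (gamma_pdf m \<Omega> x))"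
    and prodH: "\<And>y::real. measure M {\<omega>\<in>space M. \<forall>k\<in>{1..N}. G k \<omega> < y} = (\<Prod>k\<in>{1..N}. measure M {\<omega>\<in>space M. G k \<omega> < y})"
  shows "sc_gain G N \<in> borel_measurable M"
    and "measure M {\<omega>\<in>space M. sc_gain G N \<omega> < 0} = 0"
    and "\<forall>y. 0 < y \<and> y \<le> 1 \<longrightarrow>
           gc1 m \<Omega> ^ N * y ^ (m * N) \<le> measure M {\<omega>\<in>space M. sc_gain G N \<omega> < y} \<and>
           measure M {\<omega>\<in>space M. sc_gain G N \<omega> < y} \<le> gK m \<Omega> ^ N * y ^ (m * N)"
proof -
  have meas: "G k \<in> borel_measurable M" if "k \<in> {1..N}" for k
    using distributed_measurable[OF dist[OF that]] by simp
  show "sc_gain G N \<in> borel_measurable M"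
    unfolding sc_gain_def[abs_def] by (rule borel_measurable_Max) (auto intro: meas)
  have ne: "{1..N} \<noteq> {}" using assms(2) by auto
  have seteq: "{\<omega>\<in>space M. sc_gain G N \<omega> < y} = {\<omega>\<in>space M. \<forall>k\<in>{1..N}. G k \<omega> < y}" for y
    using ne by (auto simp: sc_gain_def)
  have q: "measure M {\<omega>\<in>space M. sc_gain G N \<omega> < y} = (\<Prod>k\<in>{1..N}. measure M {\<omega>\<in>space M. G k \<omega> < y})" for y
    unfolding seteq prodH ..
  have z: "measure M {\<omega>\<in>space M. G 1 \<omega> < 0} = 0"
    using gamma_bounds(1)[OF assms(1,3,4) dist[of 1]] assms(2) by auto
  show "measure M {\<omega>\<in>space M. sc_gain G N \<omega> < 0} = 0"
    unfolding q using z assms(2) by (intro prod_zero) (auto intro!: bexI[of _ 1])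
  show "\<forall>y. 0 < y \<and> y \<le> 1 \<longrightarrow>
           gc1 m \<Omega> ^ N * y ^ (m * N) \<le> measure M {\<omega>\<in>space M. sc_gain G N \<omega> < y} \<and>
           measure M {\<omega>\<in>space M. sc_gain G N \<omega> < y} \<le> gK m \<Omega> ^ N * y ^ (m * N)"
  proof (intro allI impI conjI)
    fix y :: real assume y: "0 < y \<and> y \<le> 1"
    have b: "gc1 m \<Omega> * y ^ m \<le> measure M {\<omega>\<in>space M. G k \<omega> < y} \<and> measure M {\<omega>\<in>space M. G k \<omega> < y} \<le> gK m \<Omega> * y ^ m"
      if "k \<in> {1..N}" for k
      using gamma_bounds(2)[OF assms(1,3,4) dist[OF that]] y by blast
    have pe1: "gc1 m \<Omega> ^ N * y ^ (m * N) = (\<Prod>k\<in>{1..N}. gc1 m \<Omega> * y ^ m)"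
      by (simp add: power_mult_distrib power_mult)
    have pe2: "gK m \<Omega> ^ N * y ^ (m * N) = (\<Prod>k\<in>{1..N}. gK m \<Omega> * y ^ m)"
      by (simp add: power_mult_distrib power_mult)
    have c1p: "gc1 m \<Omega> > 0" using gc1_pos assms by auto
    show "gc1 m \<Omega> ^ N * y ^ (m * N) \<le> measure M {\<omega>\<in>space M. sc_gain G N \<omega> < y}"
      unfolding pe1 q using b c1p y by (intro prod_mono) auto
    show "measure M {\<omega>\<in>space M. sc_gain G N \<omega> < y} \<le> gK m \<Omega> ^ N * y ^ (m * N)"
      unfolding pe2 q using b by (intro prod_mono) (auto simp: measure_nonneg)
  qed
qed

lemma event_generic:
  fixes g :: "'a \<Rightarrow> real" and t :: real
  assumes "prob_space M" "g \<in> borel_measurable M" "measure M {\<omega>\<in>space M. g \<omega> < 0} = 0"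
    "{\<omega>\<in>space M. \<Phi> (g \<omega>)} \<in> sets M" "\<And>x. x \<ge> 0 \<Longrightarrow> \<Phi> x \<longleftrightarrow> t \<le> x" "t \<ge> 0"
  shows "measure M {\<omega>\<in>space M. \<Phi> (g \<omega>)} = 1 - measure M {\<omega>\<in>space M. g \<omega> < t}"
proof -
  interpret prob_space M by fact
  let ?A = "{\<omega>\<in>space M. \<Phi> (g \<omega>)}" and ?B = "{\<omega>\<in>space M. t \<le> g \<omega>}" and ?Z = "{\<omega>\<in>space M. g \<omega> < 0}"
  have sB: "?B \<in> sets M" using assms(2) unfolding borel_measurable_iff_ge by blast
  have sZ: "?Z \<in> sets M" using assms(2) unfolding borel_measurable_iff_less by blast
  have "?B \<subseteq> ?A" using assms(5,6) by auto
  then have 1: "prob ?B \<le> prob ?A" using assms(4) by (rule finite_measure_mono)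
  have "?A \<subseteq> ?B \<union> ?Z" using assms(5) by force
  then have "prob ?A \<le> prob (?B \<union> ?Z)" using sB sZ by (intro finite_measure_mono) auto
  also have "\<dots> \<le> prob ?B + prob ?Z" using sB sZ by (intro measure_subadditive) auto
  finally have 2: "prob ?A \<le> prob ?B" using assms(3) by simp
  have eq: "{\<omega>\<in>space M. g \<omega> < t} = space M - ?B" by auto
  have "prob {\<omega>\<in>space M. g \<omega> < t} = 1 - prob ?B" unfolding eq by (rule prob_compl[OF sB])
  then show ?thesis using 1 2 by linarith
qed

lemma bound_rho:
  fixes q :: "real \<Rightarrow> real"
  assumes "s > 0" "c1 > 0" "\<forall>y. 0 < y \<and> y \<le> 1 \<longrightarrow> c1 * y ^ e \<le> q y \<and> q y \<le> c2 * y ^ e"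
    "\<And>y. q y \<le> 1"
  shows "\<forall>\<^sub>F \<rho> in at_top. (c1 * s ^ e) / \<rho> ^ e \<le> q (s / \<rho>) \<and> q (s / \<rho>) \<le> (c2 * s ^ e) / \<rho> ^ e \<and> q (s / \<rho>) \<le> 1"
  using eventually_ge_at_top[of s]
proof eventually_elim
  case (elim \<rho>)
  then have "0 < s / \<rho>" "s / \<rho> \<le> 1" using assms(1) by auto
  then show ?case using assms(3)[rule_format, of "s/\<rho>"] assms(4)[of "s/\<rho>"] by (simp add: power_divide)
qed

lemma phi1:
  fixes \<theta> a1 a2 \<kappa> \<rho> x :: real
  assumes "\<theta> > 0" "\<kappa> = a1 - \<theta> * a2" "\<kappa> > 0" "a2 > 0" "\<rho> > 0" "x \<ge> 0"
  shows "(\<theta> \<le> a1 * \<rho> * x / (a2 * \<rho> * x + 1)) \<longleftrightarrow> (\<theta> / \<kappa> / \<rho> \<le> x)"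
proof -
  have D: "a2 * \<rho> * x + 1 > 0" using assms by (simp add: add_nonneg_pos)
  have "(\<theta> \<le> a1 * \<rho> * x / (a2 * \<rho> * x + 1)) \<longleftrightarrow> \<theta> * (a2 * \<rho> * x + 1) \<le> a1 * \<rho> * x"
    using D by (simp add: pos_le_divide_eq)
  also have "\<dots> \<longleftrightarrow> \<theta> \<le> \<kappa> * (\<rho> * x)"
  proof -
    have "\<theta> * (a2 * \<rho> * x + 1) = \<theta> * (a2 * \<rho> * x) + \<theta>" by (simp add: algebra_simps)
    moreover have "\<kappa> * (\<rho> * x) = a1 * \<rho> * x - \<theta> * (a2 * \<rho> * x)" unfolding assms(2) by (simp add: algebra_simps)
    ultimately show ?thesis by linarith
  qed
  also have "\<dots> \<longleftrightarrow> \<theta> / \<kappa> \<le> \<rho> * x" using assms(3) by (simp add: pos_divide_le_eq mult.commute)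
  also have "\<dots> \<longleftrightarrow> \<theta> / \<kappa> / \<rho> \<le> x" by (subst pos_divide_le_eq[OF assms(5)]) (simp add: mult.commute)
  finally show ?thesis .
qed

lemma phi3:
  fixes \<theta> \<rho> x :: real
  assumes "\<rho> > 0"
  shows "(\<theta> \<le> \<rho> * x) \<longleftrightarrow> (\<theta> / \<rho> \<le> x)"
  using assms by (simp add: pos_divide_le_eq mult.commute)

lemma phi2:
  fixes \<theta> a1 a2 \<kappa> \<rho> x :: real
  assumes "\<theta> > 0" "\<kappa> = a1 - \<theta> * a2" "\<kappa> > 0" "a2 > 0" "\<rho> > 0" "x \<ge> 0"
  shows "(\<theta> \<le> a1 * \<rho> * x / (a2 * \<rho> * x + 1) \<and> \<theta> \<le> a2 * \<rho> * x) \<longleftrightarrow> (max (\<theta> / \<kappa>) (\<theta> / a2) / \<rho> \<le> x)"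
proof -
  have "\<theta> \<le> a2 * \<rho> * x \<longleftrightarrow> \<theta> / a2 \<le> \<rho> * x" using assms(4) by (simp add: pos_divide_le_eq ac_simps)
  moreover have "(\<theta> \<le> a1 * \<rho> * x / (a2 * \<rho> * x + 1)) \<longleftrightarrow> \<theta> / \<kappa> \<le> \<rho> * x"
    using phi1[OF assms] phi3[OF assms(5), of "\<theta> / \<kappa>" x] by simp
  moreover have "max (\<theta> / \<kappa>) (\<theta> / a2) / \<rho> \<le> x \<longleftrightarrow> max (\<theta> / \<kappa>) (\<theta> / a2) \<le> \<rho> * x"
    using phi3[OF assms(5)] by simp
  ultimately show ?thesis by auto
qed

theorem mainTheorem10:
  fixes M :: "'a measure"
    and Gsr Gsd Grd :: "nat \<Rightarrow> 'a \<Rightarrow> real"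
    and Nr Nd msr msd mrd :: nat
    and \<Omega>sr \<Omega>sd \<Omega>rd R \<theta> a1 a2 :: real
  assumes "prob_space M"
    and "Nr > 0" "Nd > 0" "msr > 0" "msd > 0" "mrd > 0"
    and "\<Omega>sr > 0" "\<Omega>sd > 0" "\<Omega>rd > 0"
    and indep: "prob_space.indep_vars M (\<lambda>_. borel)
        (\<lambda>(c::nat, k). if c = 0 then Gsr k else if c = 1 then Gsd k else Grd k)
        (({0} \<times> {1..Nr}) \<union> ({1} \<times> {1..Nd}) \<union> ({2} \<times> {1..Nd}))"
    and "\<And>i. i \<in> {1..Nr} \<Longrightarrow> distributed M lborel (Gsr i) (\<lambda>x. ennreal (gamma_pdf msr \<Omega>sr x))"
    and "\<And>j. j \<in> {1..Nd} \<Longrightarrow> distributed M lborel (Gsd j) (\<lambda>x. ennreal (gamma_pdf msd \<Omega>sd x))"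
    and "\<And>k. k \<in> {1..Nd} \<Longrightarrow> distributed M lborel (Grd k) (\<lambda>x. ennreal (gamma_pdf mrd \<Omega>rd x))"
    and "R > 0"
    and "\<theta> = 2 powr (2 * R) - 1"
    and "0 < a2" "a2 < 1 / (1 + \<theta>)"
    and "a1 = 1 - a2"
  shows "((\<lambda>\<rho>. - ln (P_SC M Gsr Gsd Grd Nr Nd a1 a2 \<theta> \<rho>) / ln \<rho>)
           \<longlongrightarrow> real (min (msd * Nd) (min (msr * Nr) (mrd * Nd)))) at_top"
proof -
  interpret P: prob_space M by fact
  have thp: "\<theta> > 0" using assms(14) unfolding assms(15) by simp
  define \<kappa> where "\<kappa> = a1 - \<theta> * a2"
  have "a2 * (1 + \<theta>) < 1" using assms(17) thp by (simp add: less_divide_eq)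
  then have kp: "\<kappa> > 0" unfolding \<kappa>_def using assms(18) by (simp add: algebra_simps)
  have prod_sr: "\<And>y::real. measure M {\<omega>\<in>space M. \<forall>k\<in>{1..Nr}. Gsr k \<omega> < y} = (\<Prod>k\<in>{1..Nr}. measure M {\<omega>\<in>space M. Gsr k \<omega> < y})"
    by (rule group_prod[OF assms(1) indep, where c=0]) (auto simp: assms(2))
  have prod_sd: "\<And>y::real. measure M {\<omega>\<in>space M. \<forall>k\<in>{1..Nd}. Gsd k \<omega> < y} = (\<Prod>k\<in>{1..Nd}. measure M {\<omega>\<in>space M. Gsd k \<omega> < y})"
    by (rule group_prod[OF assms(1) indep, where c=1]) (auto simp: assms(3))
  have prod_rd: "\<And>y::real. measure M {\<omega>\<in>space M. \<forall>k\<in>{1..Nd}. Grd k \<omega> < y} = (\<Prod>k\<in>{1..Nd}. measure M {\<omega>\<in>space M. Grd k \<omega> < y})"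
    by (rule group_prod[OF assms(1) indep, where c=2]) (auto simp: assms(3))
  note Gsr = group_bounds[OF assms(1,2,4,7,11) prod_sr]
  note Gsd = group_bounds[OF assms(1,3,5,8,12) prod_sd]
  note Grd = group_bounds[OF assms(1,3,6,9,13) prod_rd]
  have [measurable]: "sc_gain Gsr Nr \<in> borel_measurable M" "sc_gain Gsd Nd \<in> borel_measurable M"
    "sc_gain Grd Nd \<in> borel_measurable M" using Gsr(1) Gsd(1) Grd(1) by auto
  define qsr where "qsr y = measure M {\<omega>\<in>space M. sc_gain Gsr Nr \<omega> < y}" for y
  define qsd where "qsd y = measure M {\<omega>\<in>space M. sc_gain Gsd Nd \<omega> < y}" for y
  define qrd where "qrd y = measure M {\<omega>\<in>space M. sc_gain Grd Nd \<omega> < y}" for y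
  define sB where "sB = max (\<theta> / \<kappa>) (\<theta> / a2)"
  have sBp: "sB > 0" unfolding sB_def using thp kp by (simp add: less_max_iff_disj)
  have Peq: "\<forall>\<^sub>F \<rho> in at_top. P_SC M Gsr Gsd Grd Nr Nd a1 a2 \<theta> \<rho> =
      1 - (1 - qsd (\<theta> / \<kappa> / \<rho>)) * (1 - qsr (sB / \<rho>)) * (1 - qrd (\<theta> / \<rho>))"
    using eventually_gt_at_top[of "0::real"]
  proof eventually_elim
    case (elim \<rho>)
    have m1: "{\<omega>\<in>space M. \<theta> \<le> a1 * \<rho> * sc_gain Gsd Nd \<omega> / (a2 * \<rho> * sc_gain Gsd Nd \<omega> + 1)} \<in> sets M"
      by measurable
    have i1: "\<And>x. 0 \<le> x \<Longrightarrow> (\<theta> \<le> a1 * \<rho> * x / (a2 * \<rho> * x + 1)) \<longleftrightarrow> \<theta> / \<kappa> / \<rho> \<le> x"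
      by (rule phi1[OF thp \<kappa>_def kp assms(16) elim])
    have t1: "0 \<le> \<theta> / \<kappa> / \<rho>" using thp kp elim by simp
    have e1: "measure M {\<omega>\<in>space M. a1 * \<rho> * sc_gain Gsd Nd \<omega> / (a2 * \<rho> * sc_gain Gsd Nd \<omega> + 1) \<ge> \<theta>}
        = 1 - qsd (\<theta> / \<kappa> / \<rho>)"
      unfolding qsd_def
      by (rule event_generic[where \<Phi>="\<lambda>x. \<theta> \<le> a1 * \<rho> * x / (a2 * \<rho> * x + 1)", OF assms(1) Gsd(1,2) m1 i1 t1])
    have m2: "{\<omega>\<in>space M. \<theta> \<le> a1 * \<rho> * sc_gain Gsr Nr \<omega> / (a2 * \<rho> * sc_gain Gsr Nr \<omega> + 1) \<and> \<theta> \<le> a2 * \<rho> * sc_gain Gsr Nr \<omega>} \<in> sets M"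
      by measurable
    have i2: "\<And>x. 0 \<le> x \<Longrightarrow> (\<theta> \<le> a1 * \<rho> * x / (a2 * \<rho> * x + 1) \<and> \<theta> \<le> a2 * \<rho> * x) \<longleftrightarrow> sB / \<rho> \<le> x"
      unfolding sB_def by (rule phi2[OF thp \<kappa>_def kp assms(16) elim])
    have t2: "0 \<le> sB / \<rho>" using sBp elim by simp
    have e2: "measure M {\<omega>\<in>space M. a1 * \<rho> * sc_gain Gsr Nr \<omega> / (a2 * \<rho> * sc_gain Gsr Nr \<omega> + 1) \<ge> \<theta>
                                  \<and> a2 * \<rho> * sc_gain Gsr Nr \<omega> \<ge> \<theta>}
        = 1 - qsr (sB / \<rho>)"
      unfolding qsr_def
      by (rule event_generic[where \<Phi>="\<lambda>x. \<theta> \<le> a1 * \<rho> * x / (a2 * \<rho> * x + 1) \<and> \<theta> \<le> a2 * \<rho> * x", OF assms(1) Gsr(1,2) m2 i2 t2])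
    have m3: "{\<omega>\<in>space M. \<theta> \<le> \<rho> * sc_gain Grd Nd \<omega>} \<in> sets M"
      by measurable
    have i3: "\<And>x. 0 \<le> x \<Longrightarrow> (\<theta> \<le> \<rho> * x) \<longleftrightarrow> \<theta> / \<rho> \<le> x"
      by (rule phi3[OF elim])
    have t3: "0 \<le> \<theta> / \<rho>" using thp elim by simp
    have e3: "measure M {\<omega>\<in>space M. \<rho> * sc_gain Grd Nd \<omega> \<ge> \<theta>} = 1 - qrd (\<theta> / \<rho>)"
      unfolding qrd_def
      by (rule event_generic[where \<Phi>="\<lambda>x. \<theta> \<le> \<rho> * x", OF assms(1) Grd(1,2) m3 i3 t3])
    show ?case unfolding P_SC_def e1 e2 e3 ..
  qed
  have c1: "gc1 msd \<Omega>sd ^ Nd > 0" "gc1 msr \<Omega>sr ^ Nr > 0" "gc1 mrd \<Omega>rd ^ Nd > 0"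
    using gc1_pos[OF assms(5,8)] gc1_pos[OF assms(4,7)] gc1_pos[OF assms(6,9)] by simp_all
  have B1: "\<forall>\<^sub>F \<rho> in at_top. (gc1 msd \<Omega>sd ^ Nd * (\<theta>/\<kappa>) ^ (msd * Nd)) / \<rho> ^ (msd * Nd) \<le> qsd (\<theta>/\<kappa> / \<rho>)
      \<and> qsd (\<theta>/\<kappa> / \<rho>) \<le> (gK msd \<Omega>sd ^ Nd * (\<theta>/\<kappa>) ^ (msd * Nd)) / \<rho> ^ (msd * Nd) \<and> qsd (\<theta>/\<kappa> / \<rho>) \<le> 1"
    by (rule bound_rho[OF _ c1(1)]) (use thp kp Gsd(3) in \<open>simp_all add: qsd_def\<close>)
  have B2: "\<forall>\<^sub>F \<rho> in at_top. (gc1 msr \<Omega>sr ^ Nr * sB ^ (msr * Nr)) / \<rho> ^ (msr * Nr) \<le> qsr (sB / \<rho>)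
      \<and> qsr (sB / \<rho>) \<le> (gK msr \<Omega>sr ^ Nr * sB ^ (msr * Nr)) / \<rho> ^ (msr * Nr) \<and> qsr (sB / \<rho>) \<le> 1"
    by (rule bound_rho[OF _ c1(2)]) (use sBp Gsr(3) in \<open>simp_all add: qsr_def\<close>)
  have B3: "\<forall>\<^sub>F \<rho> in at_top. (gc1 mrd \<Omega>rd ^ Nd * \<theta> ^ (mrd * Nd)) / \<rho> ^ (mrd * Nd) \<le> qrd (\<theta> / \<rho>)
      \<and> qrd (\<theta> / \<rho>) \<le> (gK mrd \<Omega>rd ^ Nd * \<theta> ^ (mrd * Nd)) / \<rho> ^ (mrd * Nd) \<and> qrd (\<theta> / \<rho>) \<le> 1"
    by (rule bound_rho[OF _ c1(3)]) (use thp Grd(3) in \<open>simp_all add: qrd_def\<close>)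
  have L: "gc1 msd \<Omega>sd ^ Nd * (\<theta>/\<kappa>) ^ (msd * Nd) > 0" "gc1 msr \<Omega>sr ^ Nr * sB ^ (msr * Nr) > 0"
    "gc1 mrd \<Omega>rd ^ Nd * \<theta> ^ (mrd * Nd) > 0" using c1 thp kp sBp by (simp_all add: mult_pos_pos)
  show ?thesis
    by (rule core[where P="\<lambda>\<rho>. P_SC M Gsr Gsd Grd Nr Nd a1 a2 \<theta> \<rho>", OF Peq B1 B2 B3 L])
qed

end
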